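(* Let $N$ be a non-negative integer and $c_0,\dots,c_4$ parameters with $c_0+c_1+c_2+c_3+c_4=-2N-3$. For non-negative integers $i,j,x,y$ with $i+j\le N$ and $x+y\le N$, \[ \frac{T_{i,j}(x,y;c_1,c_2,c_3,c_4;N)}{\Omega(i;c_1,c_2,c_3;N-j)\,\Lambda(j;c_4,c_0;N)}=\frac{T_{y,x}(j,i;c_4,c_0,c_3,c_1;N)}{\Omega(y;c_4,c_0,c_3;N-x)\,\Lambda(x;c_1,c_2;N)}. \]
   Context: Notation: $(a)_n=a(a+1)\cdots(a+n-1)$, $(a)_0=1$; $c_{ij}=c_i+c_j$, $c_{ijk}=c_i+c_j+c_k$. Parameters are generic so that no denominator vanishes. For $0\le n,x\le N$: \[ \Omega(n;c_1,c_2,c_3;N)=\binom{N}{n}(2n+c_{23}+1)\frac{(c_2+1)_n(N+2+c_{123})_n(c_1+1)_{N-n}}{(c_3+1)_n(c_{23}+n+1)_{N+1}}, \] \[ p_n(x;c_1,c_2,c_3;N)=\Omega(n;c_1,c_2,c_3;N)\,{}_4F_3\!\left(\begin{matrix}-n,\ n+c_{23}+1,\ -x,\ x+c_{12}+1\\ c_2+1,\ N+2+c_{123},\ -N\end{matrix};1\right) \] (terminating sum), and $\Lambda(x;c_1,c_2;N)=(-1)^x\binom{N}{x}(2x+c_{12}+1)\frac{(c_2+1)_x}{(c_1+1)_x(x+c_{12}+1)_{N+1}}$. For parameters $(a_1,a_2,a_3,a_4)$, set $a_0=-2N-3-a_1-a_2-a_3-a_4$ and define, for non-negative integers $i,j,x,y$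 with $i+j\le N$, $x+y\le N$, \[ T_{i,j}(x,y;a_1,a_2,a_3,a_4;N)=p_i(x;a_1,a_2,a_3;N-j)\,p_j(y;a_3,a_0,a_4;N-x). \] In particular, in $T_{y,x}(j,i;c_4,c_0,c_3,c_1;N)$ the role of $a_0$ is played by $c_2$. *)

theory Defs
  imports Complex_Main
begin

definition hyp43 :: "nat \<Rightarrow> complex \<Rightarrow> complex \<Rightarrow> complex \<Rightarrow> complex \<Rightarrow> complex \<Rightarrow> complex \<Rightarrow> complex" where
  "hyp43 n a2 a3 a4 b1 b2 b3 =
     (\<Sum>k=0..n. pochhammer (- of_nat n) k * pochhammer a2 k * pochhammer a3 k * pochhammer a4 k
        / (pochhammer b1 k * pochhammer b2 k * pochhammer b3 k * fact k))"

definition Omega :: "nat \<Rightarrow> complex \<Rightarrow> complex \<Rightarrow> complex \<Rightarrow> nat \<Rightarrow> complex" where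
  "Omega n c1 c2 c3 N =
     of_nat (N choose n) * (2 * of_nat n + c2 + c3 + 1)
     * (pochhammer (c2 + 1) n * pochhammer (of_nat N + 2 + c1 + c2 + c3) n * pochhammer (c1 + 1) (N - n))
     / (pochhammer (c3 + 1) n * pochhammer (c2 + c3 + of_nat n + 1) (N + 1))"

definition pp :: "nat \<Rightarrow> nat \<Rightarrow> complex \<Rightarrow> complex \<Rightarrow> complex \<Rightarrow> nat \<Rightarrow> complex" where
  "pp n x c1 c2 c3 N =
     Omega n c1 c2 c3 N *
     hyp43 n (of_nat n + c2 + c3 + 1) (- of_nat x) (of_nat x + c1 + c2 + 1)
             (c2 + 1) (of_nat N + 2 + c1 + c2 + c3) (- of_nat N)"

definition Lambda :: "nat \<Rightarrow> complex \<Rightarrow> complex \<Rightarrow> nat \<Rightarrow> complex" where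
  "Lambda x c1 c2 N =
     (-1) ^ x * of_nat (N choose x) * (2 * of_nat x + c1 + c2 + 1)
     * pochhammer (c2 + 1) x / (pochhammer (c1 + 1) x * pochhammer (of_nat x + c1 + c2 + 1) (N + 1))"

definition TT :: "nat \<Rightarrow> nat \<Rightarrow> nat \<Rightarrow> nat \<Rightarrow> complex \<Rightarrow> complex \<Rightarrow> complex \<Rightarrow> complex \<Rightarrow> nat \<Rightarrow> complex" where
  "TT i j x y a1 a2 a3 a4 N =
     (let a0 = - 2 * of_nat N - 3 - a1 - a2 - a3 - a4
      in pp i x a1 a2 a3 (N - j) * pp j y a3 a0 a4 (N - x))"

text \<open>Genericity of the parameters (c0,...,c4): no sum of a nonempty proper
  subfamily of the parameters is an integer.  This guarantees that no denominator
  in the identity vanishes.\<close>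
definition generic_params :: "complex list \<Rightarrow> bool" where
  "generic_params cs \<longleftrightarrow>
     (\<forall>S. S \<subseteq> {..<length cs} \<and> S \<noteq> {} \<and> S \<noteq> {..<length cs} \<longrightarrow> (\<Sum>i\<in>S. cs ! i) \<notin> \<int>)"

end

theory Submission imports Defs begin

lemma poch_nz: "a \<notin> \<int> \<Longrightarrow> pochhammer (a::complex) n \<noteq> 0"
  by (auto simp: pochhammer_eq_0_iff)

lemma notint_add_nat: "a \<notin> \<int> \<Longrightarrow> (a::complex) + of_nat m \<notin> \<int>"
proof
  assume "a \<notin> \<int>" "a + of_nat m \<in> \<int>"
  then have "a + of_nat m - of_nat m \<in> \<int>" by (intro Ints_diff) auto
  with \<open>a \<notin> \<int>\<close> show False by simp
qed

lemma om_lam: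
  fixes d0 d3 d4 :: complex
  assumes jx: "j + x \<le> N" and "d4 \<notin> \<int>" "d0 \<notin> \<int>" "d0 + d4 \<notin> \<int>"
  shows "Omega j d3 d0 d4 (N-x) / Lambda j d4 d0 N =
    of_nat ((N-x) choose j) / of_nat (N choose j) * (-1)^j
    * pochhammer (of_nat (N-x) + 2 + d3 + d0 + d4) j * pochhammer (d3+1) (N-x-j)
    * pochhammer (of_nat j + d0 + d4 + of_nat (N-x) + 2) x"
proof -
  define L where "L = N - x"
  have NL: "N = L + x" using jx unfolding L_def by simp
  have split: "pochhammer (of_nat j + d4 + d0 + 1) (N + 1) =
     pochhammer (d0 + d4 + of_nat j + 1) (L + 1) * pochhammer (of_nat j + d0 + d4 + of_nat L + 2) x"
  proof -
    have "pochhammer (of_nat j + d4 + d0 + 1) (N + 1) = pochhammer (of_nat j + d4 + d0 + 1) (L+1)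
       * pochhammer (of_nat j + d4 + d0 + 1 + of_nat (L+1)) (N + 1 - (L+1))"
      by (rule pochhammer_product) (simp add: NL)
    also have "of_nat j + d4 + d0 + 1 + of_nat (L+1) = of_nat j + d0 + d4 + of_nat L + 2" by simp
    also have "N + 1 - (L+1) = x" using NL by simp
    also have "of_nat j + d4 + d0 + 1 = d0 + d4 + of_nat j + 1" by simp
    finally show ?thesis by (simp add: add_ac)
  qed
  have nz1: "pochhammer (d4 + 1) j \<noteq> 0"
    by (rule poch_nz) (use notint_add_nat[OF assms(2), of 1] in simp)
  have nz2: "pochhammer (d0 + 1) j \<noteq> 0"
    by (rule poch_nz) (use notint_add_nat[OF assms(3), of 1] in simp)
  have nz3: "pochhammer (d0 + d4 + of_nat j + 1) (L + 1) \<noteq> 0"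
    by (rule poch_nz) (use notint_add_nat[OF assms(4), of "j+1"] in \<open>simp add: add_ac\<close>)
  have nz4: "pochhammer (of_nat j + d0 + d4 + of_nat L + 2) x \<noteq> 0"
    by (rule poch_nz) (use notint_add_nat[OF assms(4), of "j+L+2"] in \<open>simp add: add_ac\<close>)
  have nz5: "2 * of_nat j + d4 + d0 + 1 \<noteq> (0::complex)"
  proof
    assume "2 * of_nat j + d4 + d0 + 1 = (0::complex)"
    then have "d0 + d4 = - of_nat (2*j+1)" by (simp add: algebra_simps eq_neg_iff_add_eq_0)
    then have "d0 + d4 \<in> \<int>" by simp
    with assms(4) show False by simp
  qed
  have nz6: "of_nat (N choose j) \<noteq> (0::complex)" using jx by simp
  define E where "E = 2 * of_nat j + d4 + d0 + (1::complex)"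
  have e1: "2 * of_nat j + d0 + d4 + 1 = E" unfolding E_def by simp
  have nzE: "E \<noteq> 0" using nz5 unfolding E_def .
  have m1: "(-1::complex)^j * (-1)^j = 1" by (simp flip: power_add)
  show ?thesis
    unfolding L_def[symmetric] Omega_def Lambda_def split e1 E_def[symmetric]
    using nz1 nz2 nz3 nz4 nzE nz6
    by (simp add: field_simps m1)
qed



lemma hyp43_ext:
  assumes "n \<le> K"
  shows "hyp43 n a2 a3 a4 b1 b2 b3 =
     (\<Sum>k=0..K. pochhammer (- of_nat n) k * pochhammer a2 k * pochhammer a3 k * pochhammer a4 k
        / (pochhammer b1 k * pochhammer b2 k * pochhammer b3 k * fact k))"
proof -
  have "(\<Sum>k=0..K. pochhammer (- of_nat n) k * pochhammer a2 k * pochhammer a3 k * pochhammer a4 k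
        / (pochhammer b1 k * pochhammer b2 k * pochhammer b3 k * fact k)) =
       (\<Sum>k=0..n. pochhammer (- of_nat n) k * pochhammer a2 k * pochhammer a3 k * pochhammer a4 k
        / (pochhammer b1 k * pochhammer b2 k * pochhammer b3 k * fact k))"
    by (rule sum.mono_neutral_right) (use assms in \<open>auto simp: pochhammer_of_nat_eq_0_iff\<close>)
  then show ?thesis by (simp add: hyp43_def)
qed

lemma hyp43_dual:
  "hyp43 n (of_nat n + a) (- of_nat m) (of_nat m + b) B1 B2 B3
   = hyp43 m (of_nat m + b) (- of_nat n) (of_nat n + a) B1 B2 B3"
  by (simp add: hyp43_ext[of n "n+m"] hyp43_ext[of m "n+m"] mult_ac)


lemma gen_sub: "generic_params cs \<Longrightarrow> S \<subseteq> {..<length cs} \<Longrightarrow> S \<noteq> {} \<Longrightarrow> m \<in> {..<length cs} \<Longrightarrow> m \<notin> S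
   \<Longrightarrow> (\<Sum>i\<in>S. cs ! i) \<notin> \<int>"
  unfolding generic_params_def by blast

lemma binom_sym:
  assumes "j + x \<le> N"
  shows "(of_nat ((N-x) choose j) / of_nat (N choose j) :: complex)
       = of_nat ((N-j) choose x) / of_nat (N choose x)"
proof -
  have a: "N - x - j = N - j - x" by simp
  show ?thesis using assms
    by (simp add: binomial_fact a field_simps)
qed

lemma key:
  fixes c0 c1 c2 c3 c4 :: complex
  assumes sum: "c0 + c1 + c2 + c3 + c4 = - 2 * of_nat N - 3"
    and n0: "c0 \<notin> \<int>" and n1: "c1 \<notin> \<int>" and n2: "c2 \<notin> \<int>" and n4: "c4 \<notin> \<int>"
    and n04: "c0 + c4 \<notin> \<int>" and n12: "c2 + c1 \<notin> \<int>"
    and xN: "x \<le> N" and jN: "j \<le> N"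
  shows "Omega j c3 c0 c4 (N-x) / Lambda j c4 c0 N = Omega x c3 c2 c1 (N-j) / Lambda x c1 c2 N"
proof (cases "j + x \<le> N")
  case False
  then have "N - x < j" "N - j < x" using xN jN by arith+
  then have b1: "(N-x) choose j = 0" and b2: "(N-j) choose x = 0" by (simp_all add: binomial_eq_0)
  have "Omega j c3 c0 c4 (N-x) = 0" unfolding Omega_def b1 by (simp only: of_nat_0 mult_zero_left div_0)
  moreover have "Omega x c3 c2 c1 (N-j) = 0" unfolding Omega_def b2 by (simp only: of_nat_0 mult_zero_left div_0)
  ultimately
  show ?thesis by simp
next
  case True
  have jx: "x + j \<le> N" using True by simp
  have c0: "c0 = - 2 * of_nat N - 3 - c1 - c2 - c3 - c4" using sum by (simp add: algebra_simps eq_diff_eq)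
  have nx: "of_nat (N-x) = (of_nat N - of_nat x :: complex)" using True by (simp add: of_nat_diff)
  have A: "pochhammer (of_nat (N-x) + 2 + c3 + c0 + c4) j
      = (-1)^j * pochhammer (of_nat x + c2 + c1 + of_nat (N-j) + 2) j"
  proof -
    have e1: "of_nat (N-x) + 2 + c3 + c0 + c4 = - (of_nat N + of_nat x + 1 + c1 + c2)"
      unfolding c0 nx by (simp add: algebra_simps)
    have e2: "of_nat N + of_nat x + 1 + c1 + c2 - of_nat j + 1 = of_nat x + c2 + c1 + of_nat (N-j) + (2::complex)"
      using True by (simp add: of_nat_diff algebra_simps)
    show ?thesis by (simp only: e1 pochhammer_minus e2)
  qed
  have B: "pochhammer (of_nat j + c0 + c4 + of_nat (N-x) + 2) x
      = (-1)^x * pochhammer (of_nat (N-j) + 2 + c3 + c2 + c1) x"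
  proof -
    have e1: "of_nat j + c0 + c4 + of_nat (N-x) + 2 = - (of_nat N + of_nat x + 1 + c1 + c2 + c3 - of_nat j)"
      unfolding c0 nx by (simp add: algebra_simps)
    have e2: "of_nat N + of_nat x + 1 + c1 + c2 + c3 - of_nat j - of_nat x + 1 = of_nat (N-j) + 2 + c3 + c2 + (c1::complex)"
      using True by (simp add: of_nat_diff algebra_simps)
    show ?thesis by (simp only: e1 pochhammer_minus e2)
  qed
  have m1: "(-1::complex)^j * (-1)^j = 1" by (simp flip: power_add)
  have d: "N - x - j = N - j - x" by simp
  show ?thesis
    unfolding om_lam[OF True n4 n0 n04] om_lam[OF jx n1 n2 n12] A B binom_sym[OF True] d
    using m1 by (simp add: algebra_simps)
qed


lemma gen5:
  assumes "generic_params [c0, c1, c2, c3, c4]"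
  shows "c0 \<notin> \<int>" "c1 \<notin> \<int>" "c2 \<notin> \<int>" "c3 \<notin> \<int>" "c4 \<notin> \<int>"
    "c0 + c4 \<notin> \<int>" "c2 + c1 \<notin> \<int>" "c2 + c3 \<notin> \<int>" "c0 + c3 \<notin> \<int>"
    "c1 + c2 + c3 \<notin> \<int>" "c0 + c3 + c4 \<notin> \<int>"
proof -
  have "(\<Sum>i\<in>{0}. [c0, c1, c2, c3, c4] ! i) \<notin> \<int>"
    by (rule gen_sub[OF assms, of _ 1]) simp_all
  then show "c0 \<notin> \<int>" by (simp add: add_ac)
  have "(\<Sum>i\<in>{1}. [c0, c1, c2, c3, c4] ! i) \<notin> \<int>"
    by (rule gen_sub[OF assms, of _ 0]) simp_all
  then show "c1 \<notin> \<int>" by (simp add: add_ac)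
  have "(\<Sum>i\<in>{2}. [c0, c1, c2, c3, c4] ! i) \<notin> \<int>"
    by (rule gen_sub[OF assms, of _ 0]) simp_all
  then show "c2 \<notin> \<int>" by (simp add: add_ac)
  have "(\<Sum>i\<in>{3}. [c0, c1, c2, c3, c4] ! i) \<notin> \<int>"
    by (rule gen_sub[OF assms, of _ 0]) simp_all
  then show "c3 \<notin> \<int>" by (simp add: add_ac)
  have "(\<Sum>i\<in>{4}. [c0, c1, c2, c3, c4] ! i) \<notin> \<int>"
    by (rule gen_sub[OF assms, of _ 0]) simp_all
  then show "c4 \<notin> \<int>" by (simp add: add_ac)
  have "(\<Sum>i\<in>{0,4}. [c0, c1, c2, c3, c4] ! i) \<notin> \<int>"
    by (rule gen_sub[OF assms, of _ 1]) simp_all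
  then show "c0 + c4 \<notin> \<int>" by (simp add: add_ac)
  have "(\<Sum>i\<in>{1,2}. [c0, c1, c2, c3, c4] ! i) \<notin> \<int>"
    by (rule gen_sub[OF assms, of _ 0]) simp_all
  then show "c2 + c1 \<notin> \<int>" by (simp add: add_ac)
  have "(\<Sum>i\<in>{2,3}. [c0, c1, c2, c3, c4] ! i) \<notin> \<int>"
    by (rule gen_sub[OF assms, of _ 0]) simp_all
  then show "c2 + c3 \<notin> \<int>" by (simp add: add_ac)
  have "(\<Sum>i\<in>{0,3}. [c0, c1, c2, c3, c4] ! i) \<notin> \<int>"
    by (rule gen_sub[OF assms, of _ 1]) simp_all
  then show "c0 + c3 \<notin> \<int>" by (simp add: add_ac)
  have "(\<Sum>i\<in>{1,2,3}. [c0, c1, c2, c3, c4] ! i) \<notin> \<int>"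
    by (rule gen_sub[OF assms, of _ 0]) simp_all
  then show "c1 + c2 + c3 \<notin> \<int>" by (simp add: add_ac)
  have "(\<Sum>i\<in>{0,3,4}. [c0, c1, c2, c3, c4] ! i) \<notin> \<int>"
    by (rule gen_sub[OF assms, of _ 1]) simp_all
  then show "c0 + c3 + c4 \<notin> \<int>" by (simp add: add_ac)
qed


lemma omega_nz:
  fixes a b c :: complex
  assumes "n \<le> M" "a \<notin> \<int>" "b \<notin> \<int>" "c \<notin> \<int>" "b + c \<notin> \<int>" "a + b + c \<notin> \<int>"
  shows "Omega n a b c M \<noteq> 0"
proof -
  have f1: "2 * of_nat n + b + c + 1 \<noteq> 0"
  proof
    assume "2 * of_nat n + b + c + 1 = 0"
    then have "b + c = - of_nat (2*n+1)" by (simp add: algebra_simps eq_neg_iff_add_eq_0)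
    then have "b + c \<in> \<int>" by simp
    with assms(5) show False by simp
  qed
  have f2: "pochhammer (b + 1) n \<noteq> 0"
    by (rule poch_nz) (use notint_add_nat[OF assms(3), of 1] in simp)
  have f3: "pochhammer (of_nat M + 2 + a + b + c) n \<noteq> 0"
    by (rule poch_nz) (use notint_add_nat[OF assms(6), of "M+2"] in \<open>simp add: add_ac\<close>)
  have f4: "pochhammer (a + 1) (M - n) \<noteq> 0"
    by (rule poch_nz) (use notint_add_nat[OF assms(2), of 1] in simp)
  have f5: "pochhammer (c + 1) n \<noteq> 0"
    by (rule poch_nz) (use notint_add_nat[OF assms(4), of 1] in simp)
  have f6: "pochhammer (b + c + of_nat n + 1) (M + 1) \<noteq> 0"
    by (rule poch_nz) (use notint_add_nat[OF assms(5), of "n+1"] in \<open>simp add: add_ac\<close>)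
  have f7: "of_nat (M choose n) \<noteq> (0::complex)" using assms(1) by simp
  show ?thesis unfolding Omega_def using f1 f2 f3 f4 f5 f6 f7 by simp
qed

lemma cancel_aux: "(a::complex) \<noteq> 0 \<Longrightarrow> a * h1 * (b * h2) / (a * l) = h1 * h2 * (b / l)"
  by (cases "l = 0") (auto simp: field_simps)

theorem mainTheorem2:
  fixes N i j x y :: nat and c0 c1 c2 c3 c4 :: complex
  assumes "c0 + c1 + c2 + c3 + c4 = - 2 * of_nat N - 3"
    and "generic_params [c0, c1, c2, c3, c4]"
    and "i + j \<le> N" and "x + y \<le> N"
  shows "TT i j x y c1 c2 c3 c4 N / (Omega i c1 c2 c3 (N - j) * Lambda j c4 c0 N)
       = TT y x j i c4 c0 c3 c1 N / (Omega y c4 c0 c3 (N - x) * Lambda x c1 c2 N)"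
proof -
  note g = gen5[OF assms(2)]
  have a0: "- 2 * of_nat N - 3 - c1 - c2 - c3 - c4 = c0" using assms(1) by (simp add: algebra_simps eq_diff_eq)
  have a0': "- 2 * of_nat N - 3 - c4 - c0 - c3 - c1 = c2" using assms(1) by (simp add: algebra_simps eq_diff_eq)
  define H1 where "H1 = hyp43 i (of_nat i + c2 + c3 + 1) (- of_nat x) (of_nat x + c1 + c2 + 1) (c2 + 1) (of_nat (N-j) + 2 + c1 + c2 + c3) (- of_nat (N-j))"
  define H2 where "H2 = hyp43 j (of_nat j + c0 + c4 + 1) (- of_nat y) (of_nat y + c3 + c0 + 1) (c0 + 1) (of_nat (N-x) + 2 + c3 + c0 + c4) (- of_nat (N-x))"
  define H1' where "H1' = hyp43 x (of_nat x + c2 + c1 + 1) (- of_nat i) (of_nat i + c3 + c2 + 1) (c2 + 1) (of_nat (N-j) + 2 + c3 + c2 + c1) (- of_nat (N-j))"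
  define H2' where "H2' = hyp43 y (of_nat y + c0 + c3 + 1) (- of_nat j) (of_nat j + c4 + c0 + 1) (c0 + 1) (of_nat (N-x) + 2 + c4 + c0 + c3) (- of_nat (N-x))"
  have L: "TT i j x y c1 c2 c3 c4 N = Omega i c1 c2 c3 (N-j) * H1 * (Omega j c3 c0 c4 (N-x) * H2)"
    unfolding TT_def Let_def a0 pp_def H1_def H2_def by simp
  have R: "TT y x j i c4 c0 c3 c1 N = Omega y c4 c0 c3 (N-x) * H2' * (Omega x c3 c2 c1 (N-j) * H1')"
    unfolding TT_def Let_def a0' pp_def H1'_def H2'_def by simp
  have h1: "H1' = H1"
  proof -
    have "H1' = hyp43 x (of_nat x + (c2+c1+1)) (- of_nat i) (of_nat i + (c3+c2+1)) (c2 + 1) (of_nat (N-j) + 2 + c1 + c2 + c3) (- of_nat (N-j))"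
      unfolding H1'_def by (simp add: add_ac)
    also have "\<dots> = hyp43 i (of_nat i + (c3+c2+1)) (- of_nat x) (of_nat x + (c2+c1+1)) (c2 + 1) (of_nat (N-j) + 2 + c1 + c2 + c3) (- of_nat (N-j))"
      by (rule hyp43_dual)
    also have "\<dots> = H1" unfolding H1_def by (simp add: add_ac)
    finally show ?thesis .
  qed
  have h2: "H2' = H2"
  proof -
    have "H2' = hyp43 y (of_nat y + (c0+c3+1)) (- of_nat j) (of_nat j + (c4+c0+1)) (c0 + 1) (of_nat (N-x) + 2 + c3 + c0 + c4) (- of_nat (N-x))"
      unfolding H2'_def by (simp add: add_ac)
    also have "\<dots> = hyp43 j (of_nat j + (c4+c0+1)) (- of_nat y) (of_nat y + (c0+c3+1)) (c0 + 1) (of_nat (N-x) + 2 + c3 + c0 + c4) (- of_nat (N-x))"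
      by (rule hyp43_dual)
    also have "\<dots> = H2" unfolding H2_def by (simp add: add_ac)
    finally show ?thesis .
  qed
  have nzi: "Omega i c1 c2 c3 (N - j) \<noteq> 0"
    by (rule omega_nz) (use assms(3) g in auto)
  have nzy: "Omega y c4 c0 c3 (N - x) \<noteq> 0"
    by (rule omega_nz) (use assms(4) g in \<open>auto simp: add_ac\<close>)
  have K: "Omega j c3 c0 c4 (N-x) / Lambda j c4 c0 N = Omega x c3 c2 c1 (N-j) / Lambda x c1 c2 N"
    by (rule key[OF assms(1)]) (use g assms(3,4) in auto)
  show ?thesis
    unfolding L R cancel_aux[OF nzi] cancel_aux[OF nzy] h1 h2 K by simp
qed

end
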